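(* Let $N\ge1$, $\lambda_1,\dots,\lambda_N$ distinct real numbers, $\mu_1,\dots,\mu_N$ nonzero real constants, $A=\mathrm{diag}(\lambda_1,\dots,\lambda_N)$, $B=\mathrm{diag}(\mu_1,\dots,\mu_N)$. Define functions on $\mathbb{R}^{6N}$ by \[F_1=-8(\langle P_1,BQ_1\rangle-\langle P_3,BQ_3\rangle),\] and for $m\ge2$ \[\begin{aligned}F_m=&\,4\sum_{i=1}^{m-1}\Big[(\langle A^{i-1}P_1,BQ_1\rangle-\langle A^{i-1}P_3,BQ_3\rangle)(\langle A^{m-i-1}P_1,BQ_1\rangle-\langle A^{m-i-1}P_3,BQ_3\rangle)\\ &\quad+2(\langle A^{i-1}P_1,BQ_2\rangle+\langle A^{i-1}P_2,BQ_3\rangle)(\langle A^{m-i-1}P_2,BQ_1\rangle+\langle A^{m-i-1}P_3,BQ_2\rangle)\Big]\\ &-8(\langle A^{m-1}P_1,BQ_1\rangle-\langle A^{m-1}P_3,BQ_3\rangle).\end{aligned}\] Then every $F_m$, $m\ge1$, is an integral of motion of the nonlinearized spatial system \[ \begin{pmatrix}\phi_{1j}\\ \phi_{2j}\\ \phi_{3j}\end{pmatrix}_x=U(\tilde u,\lambda_j)\begin{pmatrix}\phi_{1j}\\ \phi_{2j}\\ \phi_{3j}\end{pmatrix},\qquad \begin{pmatrix}\psi_{1j}\\ \psi_{2j}\\ \psi_{3j}\end{pmatrix}_x=-U(\tilde u,\lambda_j)^T\begin{pmatrix}\psi_{1j}\\ \psi_{2j}\\ \psi_{3j}\end{pmatrix},\quad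 j=1,\dots,N, \] with $\tilde u=(\tilde q,\tilde r)^T$, $\tilde q=\sqrt2(\langle P_1,BQ_2\rangle+\langle P_2,BQ_3\rangle)$, $\tilde r=\sqrt2(\langle P_2,BQ_1\rangle+\langle P_3,BQ_2\rangle)$. Moreover, together with $\bar F_j=\sum_{i=1}^3\phi_{ij}\psi_{ij}$, $1\le j\le N$, they form an involutive system: \[\{F_k,F_l\}=\{F_m,\bar F_j\}=0,\qquad m,k,l\ge1,\ 1\le j\le N.\]
   Context: On $\mathbb{R}^{6N}$ with coordinates $\phi_{ij},\psi_{ij}$ ($i=1,2,3$, $j=1,\dots,N$), $P_i=(\phi_{i1},\dots,\phi_{iN})^T$, $Q_i=(\psi_{i1},\dots,\psi_{iN})^T$; $\langle\cdot,\cdot\rangle$ is the standard inner product on $\mathbb{R}^N$. For $u=(q,r)^T$, $U(u,\lambda)=\begin{pmatrix}-2\lambda&\sqrt2 q&0\\ \sqrt2 r&0&\sqrt2 q\\ 0&\sqrt2 r&2\lambda\end{pmatrix}$. The Poisson bracket is $\{F,G\}=\sum_{i=1}^3\big(\langle \tfrac{\partial F}{\partial Q_i},B^{-1}\tfrac{\partial G}{\partial P_i}\rangle-\langle \tfrac{\partial F}{\partial P_i},B^{-1}\tfrac{\partial G}{\partial Q_i}\rangle\big)$ with $\frac{\partial}{\partial P_i}=(\frac{\partial}{\partial\phi_{i1}},\dots,\frac{\partial}{\partial\phi_{iN}})^T$, similarly for $Q_i$. *)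

theory Defs
  imports "HOL-Analysis.Analysis"
begin

text \<open>A point of R^(6N) is a pair (phi, psi) of coordinate families;
  phi i j and psi i j are used for i in {1,2,3}, j in {1..N}.\<close>
type_synonym point = "(nat \<Rightarrow> nat \<Rightarrow> real) \<times> (nat \<Rightarrow> nat \<Rightarrow> real)"

text \<open>ip N lam mu k a b z = < A^k P_a, B Q_b >\<close>
definition ip :: "nat \<Rightarrow> (nat \<Rightarrow> real) \<Rightarrow> (nat \<Rightarrow> real) \<Rightarrow> nat \<Rightarrow> nat \<Rightarrow> nat \<Rightarrow> point \<Rightarrow> real" where
  "ip N lam mu k a b z = (\<Sum>j=1..N. (lam j ^ k * fst z a j) * (mu j * snd z b j))"

definition Fm :: "nat \<Rightarrow> (nat \<Rightarrow> real) \<Rightarrow> (nat \<Rightarrow> real) \<Rightarrow> nat \<Rightarrow> point \<Rightarrow> real" where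
  "Fm N lam mu m z =
    (if m = 1 then -8 * (ip N lam mu 0 1 1 z - ip N lam mu 0 3 3 z)
     else 4 * (\<Sum>i=1..m-1.
            (ip N lam mu (i-1) 1 1 z - ip N lam mu (i-1) 3 3 z)
              * (ip N lam mu (m-i-1) 1 1 z - ip N lam mu (m-i-1) 3 3 z)
          + 2 * (ip N lam mu (i-1) 1 2 z + ip N lam mu (i-1) 2 3 z)
              * (ip N lam mu (m-i-1) 2 1 z + ip N lam mu (m-i-1) 3 2 z))
        - 8 * (ip N lam mu (m-1) 1 1 z - ip N lam mu (m-1) 3 3 z))"

definition Fbar :: "nat \<Rightarrow> point \<Rightarrow> real" where
  "Fbar j z = (\<Sum>i=1..3. fst z i j * snd z i j)"

definition Umat :: "real \<Rightarrow> real \<Rightarrow> real \<Rightarrow> nat \<Rightarrow> nat \<Rightarrow> real" where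
  "Umat q r l i k =
    (if i = 1 \<and> k = 1 then -2 * l
     else if i = 1 \<and> k = 2 then sqrt 2 * q
     else if i = 2 \<and> k = 1 then sqrt 2 * r
     else if i = 2 \<and> k = 3 then sqrt 2 * q
     else if i = 3 \<and> k = 2 then sqrt 2 * r
     else if i = 3 \<and> k = 3 then 2 * l
     else 0)"

definition qt :: "nat \<Rightarrow> (nat \<Rightarrow> real) \<Rightarrow> (nat \<Rightarrow> real) \<Rightarrow> point \<Rightarrow> real" where
  "qt N lam mu z = sqrt 2 * (ip N lam mu 0 1 2 z + ip N lam mu 0 2 3 z)"

definition rt :: "nat \<Rightarrow> (nat \<Rightarrow> real) \<Rightarrow> (nat \<Rightarrow> real) \<Rightarrow> point \<Rightarrow> real" where
  "rt N lam mu z = sqrt 2 * (ip N lam mu 0 2 1 z + ip N lam mu 0 3 2 z)"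

definition is_solution ::
  "nat \<Rightarrow> (nat \<Rightarrow> real) \<Rightarrow> (nat \<Rightarrow> real) \<Rightarrow> real \<Rightarrow> real \<Rightarrow> (real \<Rightarrow> point) \<Rightarrow> bool" where
  "is_solution N lam mu a b Z \<longleftrightarrow>
    (\<forall>x \<in> {a<..<b}. \<forall>i \<in> {1..3}. \<forall>j \<in> {1..N}.
       ((\<lambda>y. fst (Z y) i j) has_real_derivative
          (\<Sum>k=1..3. Umat (qt N lam mu (Z x)) (rt N lam mu (Z x)) (lam j) i k * fst (Z x) k j)) (at x)
     \<and> ((\<lambda>y. snd (Z y) i j) has_real_derivative
          - (\<Sum>k=1..3. Umat (qt N lam mu (Z x)) (rt N lam mu (Z x)) (lam j) k i * snd (Z x) k j)) (at x))"

definition pd_phi :: "(point \<Rightarrow> real) \<Rightarrow> point \<Rightarrow> nat \<Rightarrow> nat \<Rightarrow> real" where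
  "pd_phi F z i j = deriv (\<lambda>t. F ((\<lambda>a c. if a = i \<and> c = j then fst z a c + t else fst z a c), snd z)) 0"

definition pd_psi :: "(point \<Rightarrow> real) \<Rightarrow> point \<Rightarrow> nat \<Rightarrow> nat \<Rightarrow> real" where
  "pd_psi F z i j = deriv (\<lambda>t. F (fst z, (\<lambda>a c. if a = i \<and> c = j then snd z a c + t else snd z a c))) 0"

text \<open>Poisson bracket with B^{-1} = diag(1/mu_1, ..., 1/mu_N).\<close>
definition pbracket :: "nat \<Rightarrow> (nat \<Rightarrow> real) \<Rightarrow> (point \<Rightarrow> real) \<Rightarrow> (point \<Rightarrow> real) \<Rightarrow> point \<Rightarrow> real" where
  "pbracket N mu F G z =
    (\<Sum>i=1..3. \<Sum>j=1..N.
       pd_psi F z i j * (pd_phi G z i j / mu j) - pd_phi F z i j * (pd_psi G z i j / mu j))"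

end

theory Submission
  imports Defs "HOL-Analysis.Analysis"
begin


definition Ah :: "(nat \<Rightarrow> real) \<Rightarrow> nat \<Rightarrow> real" where
  "Ah A n = (if n = 0 then -1 else A (n - 1))"
definition Zh :: "(nat \<Rightarrow> real) \<Rightarrow> nat \<Rightarrow> real" where
  "Zh A n = (if n = 0 then 0 else A (n - 1))"

lemma Ah_Suc[simp]: "Ah A (Suc n) = A n" by (simp add: Ah_def)
lemma Zh_Suc[simp]: "Zh A (Suc n) = A n" by (simp add: Zh_def)

definition Dt :: "(nat \<Rightarrow> real) \<Rightarrow> (nat \<Rightarrow> real) \<Rightarrow> (nat \<Rightarrow> real) \<Rightarrow> nat \<Rightarrow> nat \<Rightarrow> nat \<Rightarrow> real" where
  "Dt A B C u v w = Ah A u * (Zh C v * Zh B w - Zh C w * Zh B v)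
     - Ah A v * (Zh C u * Zh B w - Zh C w * Zh B u)
     + Ah A w * (Zh C u * Zh B v - Zh C v * Zh B u)"

definition gA :: "(nat \<Rightarrow> real) \<Rightarrow> nat \<Rightarrow> nat \<Rightarrow> real" where
  "gA A m p = 8 * Ah A (m - 1 - p)"
definition gZ :: "(nat \<Rightarrow> real) \<Rightarrow> nat \<Rightarrow> nat \<Rightarrow> real" where
  "gZ C m p = 8 * Zh C (m - 1 - p)"

definition PBr :: "(nat \<Rightarrow> real) \<Rightarrow> (nat \<Rightarrow> real) \<Rightarrow> (nat \<Rightarrow> real) \<Rightarrow> nat \<Rightarrow> nat \<Rightarrow> real" where
  "PBr A B C k l = (\<Sum>p<k. \<Sum>q<l.
      gA A k p * gZ C l q * B (p+q) - gA A k p * gZ B l q * C (p+q)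
    - gZ C k p * gA A l q * B (p+q) + gZ C k p * gZ B l q * A (p+q)
    + gZ B k p * gA A l q * C (p+q) - gZ B k p * gZ C l q * A (p+q))"

lemma PBr_antisym: "PBr A B C k l = - PBr A B C l k"
proof -
  have "PBr A B C l k = (\<Sum>p<k. \<Sum>q<l.
      gA A l q * gZ C k p * B (q+p) - gA A l q * gZ B k p * C (q+p)
    - gZ C l q * gA A k p * B (q+p) + gZ C l q * gZ B k p * A (q+p)
    + gZ B l q * gA A k p * C (q+p) - gZ B l q * gZ C k p * A (q+p))"
    unfolding PBr_def by (rule sum.swap)
  also have "\<dots> = - PBr A B C k l"
    unfolding PBr_def sum_negf[symmetric]
    by (intro sum.cong refl) (simp add: algebra_simps)
  finally show ?thesis by simp
qed

lemma Dt_swap12: "Dt A B C v u w = - Dt A B C u v w"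
  unfolding Dt_def by (simp add: algebra_simps)
lemma Dt_swap23: "Dt A B C u w v = - Dt A B C u v w"
  unfolding Dt_def by (simp add: algebra_simps)

lemma rev_sum: "(\<Sum>q<l. f q) = (\<Sum>v<l. (f (l - Suc v) :: real))"
  by (rule sum.nat_diff_reindex[symmetric])

lemma rev2: "(\<Sum>p<k. \<Sum>q<l. F p q) = (\<Sum>u<k. \<Sum>v<l. (F (k - Suc u) (l - Suc v)::real))"
proof -
  have "(\<Sum>p<k. \<Sum>q<l. F p q) = (\<Sum>u<k. \<Sum>q<l. F (k - Suc u) q)"
    by (rule rev_sum[of "\<lambda>p. \<Sum>q<l. F p q" k])
  also have "\<dots> = (\<Sum>u<k. \<Sum>v<l. F (k - Suc u) (l - Suc v))"
    by (rule sum.cong[OF refl rev_sum[of "\<lambda>q. F (k - Suc _) q" l]])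
  finally show ?thesis .
qed

lemma PBr_Dt:
  "PBr A B C k l = 64 * (\<Sum>u<k. \<Sum>v<l. Dt A B C u v (k + l - 1 - u - v))"
proof -
  have "PBr A B C k l = (\<Sum>p<k. \<Sum>q<l. 64 * Dt A B C (k - Suc p) (l - Suc q) (Suc (p+q)))"
    unfolding PBr_def gA_def gZ_def Dt_def
    by (intro sum.cong refl) (simp add: algebra_simps)
  also have "\<dots> = (\<Sum>u<k. \<Sum>v<l. 64 * Dt A B C u v (k + l - 1 - u - v))"
    apply (subst rev2)
    apply (intro sum.cong refl)
    apply (simp add: Suc_diff_Suc)
    done
  finally show ?thesis by (simp add: sum_distrib_left)
qed

lemma reflect0:
  fixes g :: "nat \<Rightarrow> nat \<Rightarrow> real"
  assumes "\<And>x y. g x y = - g y x"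
  shows "(\<Sum>v\<in>{a..<b}. g v (a + b - 1 - v)) = 0"
proof -
  have "(\<Sum>v\<in>{a..<b}. g v (a + b - 1 - v)) = (\<Sum>v\<in>{a..<b}. g (a + b - 1 - v) v)"
    by (rule sum.reindex_bij_witness[of _ "\<lambda>v. a + b - 1 - v" "\<lambda>v. a + b - 1 - v"]) auto
  also have "\<dots> = - (\<Sum>v\<in>{a..<b}. g v (a + b - 1 - v))"
    by (subst sum_negf[symmetric]) (intro sum.cong refl, rule assms)
  finally show ?thesis by simp
qed

lemma tri0:
  fixes f :: "nat \<Rightarrow> nat \<Rightarrow> real"
  assumes "\<And>x y. f x y = - f y x"
  shows "(\<Sum>u<k. \<Sum>v<k-u. f u v) = 0"
proof -
  have S: "Sigma {..<k} (\<lambda>u. {..<k-u}) = {(u,v). u + v < k}" by auto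
  have E: "(\<Sum>u<k. \<Sum>v<k-u. f u v) = (\<Sum>(u,v)\<in>{(u,v). u + v < k}. f u v)"
    by (simp add: sum.Sigma S[symmetric])
  have "(\<Sum>(u,v)\<in>{(u,v). u + v < k}. f u v) = (\<Sum>(u,v)\<in>{(u,v). u + v < k}. f v u)"
    by (rule sum.reindex_bij_witness[of _ prod.swap prod.swap]) auto
  also have "\<dots> = - (\<Sum>(u,v)\<in>{(u,v). u + v < k}. f u v)"
    by (subst sum_negf[symmetric]) (intro sum.cong refl, clarify, rule assms)
  finally have "(\<Sum>(u,v)\<in>{(u,v). u + v < k}. f u v) = 0" by simp
  thus ?thesis using E by simp
qed

lemma PBr_zero_le:
  assumes "k \<le> l"
  shows "PBr A B C k l = 0"
proof -
  have "(\<Sum>v<l. Dt A B C u v (k + l - 1 - u - v)) = (\<Sum>v<k-u. Dt A B C u v (k + l - 1 - u - v))"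
    if "u < k" for u
  proof -
    have "(\<Sum>v<l. Dt A B C u v (k + l - 1 - u - v)) =
      (\<Sum>v\<in>{0..<k-u}. Dt A B C u v (k + l - 1 - u - v)) + (\<Sum>v\<in>{k-u..<l}. Dt A B C u v (k + l - 1 - u - v))"
      using that assms by (simp add: lessThan_atLeast0 sum.atLeastLessThan_concat)
    moreover have "(\<Sum>v\<in>{k-u..<l}. Dt A B C u v (k + l - 1 - u - v)) = 0"
    proof -
      have "(\<Sum>v\<in>{k-u..<l}. Dt A B C u v (k + l - 1 - u - v)) = (\<Sum>v\<in>{k-u..<l}. Dt A B C u v ((k-u) + l - 1 - v))"
        using that by (intro sum.cong refl) (simp)
      also have "\<dots> = 0" by (rule reflect0) (rule Dt_swap23)
      finally show ?thesis .
    qed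
    ultimately show ?thesis by (simp add: lessThan_atLeast0)
  qed
  note inner = this
  have "(\<Sum>u<k. \<Sum>v<l. Dt A B C u v (k + l - 1 - u - v)) = (\<Sum>u<k. \<Sum>v<k-u. Dt A B C u v (k + l - 1 - u - v))"
    by (rule sum.cong[OF refl]) (rule inner, simp)
  also have "\<dots> = 0"
    by (rule tri0) (metis Dt_swap12 diff_commute)
  finally show ?thesis by (simp add: PBr_Dt)
qed

lemma PBr_zero: "PBr A B C k l = 0"
proof (cases "k \<le> l")
  case True thus ?thesis by (rule PBr_zero_le)
next
  case False
  hence "PBr A B C l k = 0" by (intro PBr_zero_le) simp
  thus ?thesis by (simp add: PBr_antisym[of A B C k l])
qed




definition Phi :: "nat \<Rightarrow> (nat \<Rightarrow> real) \<Rightarrow> (nat \<Rightarrow> real) \<Rightarrow> (nat \<Rightarrow> real) \<Rightarrow> real" where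
  "Phi m A B C = 4 * (\<Sum>i=1..m-1. A (i-1) * A (m-i-1) + 2 * B (i-1) * C (m-i-1)) - 8 * A (m-1)"

lemma Phi_deriv0:
  assumes "\<And>n. ((\<lambda>y. a y n) has_real_derivative da n) (at x)"
    and "\<And>n. ((\<lambda>y. b y n) has_real_derivative db n) (at x)"
    and "\<And>n. ((\<lambda>y. c y n) has_real_derivative dc n) (at x)"
  shows "((\<lambda>y. Phi m (a y) (b y) (c y)) has_real_derivative
     4*(\<Sum>i=1..m-1. da(i-1)*a x(m-i-1) + a x(i-1)*da(m-i-1) + 2*(db(i-1)*c x(m-i-1) + b x(i-1)*dc(m-i-1))) - 8*da(m-1)) (at x)"
  unfolding Phi_def
  by (rule derivative_eq_intros assms refl | simp add: algebra_simps)+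

lemma Dphi_eq:
  assumes "m \<ge> 1"
  shows "4*(\<Sum>i=1..m-1. da(i-1)*A(m-i-1) + A(i-1)*da(m-i-1) + 2*(db(i-1)*C(m-i-1) + B(i-1)*dc(m-i-1))) - 8*da(m-1)
    = (\<Sum>p<m. gA A m p * da p + gZ C m p * db p + gZ B m p * dc p)"
proof -
  obtain n where m: "m = Suc n" using assms by (cases m) auto
  have s1: "(\<Sum>i=1..n. F (i - 1)) = (\<Sum>p<n. F p)" for F :: "nat \<Rightarrow> real"
    by (rule sum.reindex_bij_witness[of _ Suc "\<lambda>i. i - 1"]) auto
  have "(\<Sum>i=1..m-1. da(i-1)*A(m-i-1) + A(i-1)*da(m-i-1) + 2*(db(i-1)*C(m-i-1) + B(i-1)*dc(m-i-1)))
     = (\<Sum>p<n. da p*A(n-1-p) + A p*da(n-1-p) + 2*(db p*C(n-1-p) + B p*dc(n-1-p)))"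
    using s1[of "\<lambda>p. da p*A(n-1-p) + A p*da(n-1-p) + 2*(db p*C(n-1-p) + B p*dc(n-1-p))"]
    unfolding m by (simp add: diff_commute)
  also have "\<dots> = (\<Sum>p<n. da p*A(n-1-p)) + (\<Sum>p<n. A p*da(n-1-p)) + 2*(\<Sum>p<n. db p*C(n-1-p)) + 2 * (\<Sum>p<n. B p*dc(n-1-p))"
    by (simp add: sum.distrib sum_distrib_left)
  also have "(\<Sum>p<n. A p*da(n-1-p)) = (\<Sum>p<n. A (n-1-p)*da p)"
    by (subst rev_sum) (intro sum.cong refl, simp)
  also have "(\<Sum>p<n. B p*dc(n-1-p)) = (\<Sum>p<n. B (n-1-p)*dc p)"
    by (subst rev_sum) (intro sum.cong refl, simp)
  finally have L: "(\<Sum>i=1..m-1. da(i-1)*A(m-i-1) + A(i-1)*da(m-i-1) + 2*(db(i-1)*C(m-i-1) + B(i-1)*dc(m-i-1)))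
     = (\<Sum>p<n. 2 * (A (n-1-p) * da p) + 2 * (C (n-1-p) * db p) + 2 * (B (n-1-p) * dc p))"
    by (simp add: sum.distrib sum_distrib_left algebra_simps)
  have R: "(\<Sum>p<m. gA A m p * da p + gZ C m p * db p + gZ B m p * dc p)
      = (\<Sum>p<n. 8 * (A (n-1-p) * da p) + 8 * (C (n-1-p) * db p) + 8 * (B (n-1-p) * dc p)) - 8 * da n"
  proof -
    have "(\<Sum>p<n. gA A m p * da p + gZ C m p * db p + gZ B m p * dc p)
       = (\<Sum>p<n. 8 * (A (n-1-p) * da p) + 8 * (C (n-1-p) * db p) + 8 * (B (n-1-p) * dc p))"
      unfolding m gA_def gZ_def Ah_def Zh_def by (intro sum.cong refl) (simp add: diff_commute)
    thus ?thesis unfolding m by (simp add: gA_def gZ_def Ah_def Zh_def)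
  qed
  show ?thesis unfolding L R by (simp add: m sum_distrib_left sum.distrib algebra_simps)
qed



definition Am :: "nat \<Rightarrow> (nat \<Rightarrow> real) \<Rightarrow> (nat \<Rightarrow> real) \<Rightarrow> point \<Rightarrow> nat \<Rightarrow> real" where
  "Am N lam mu z n = ip N lam mu n 1 1 z - ip N lam mu n 3 3 z"
definition Bm :: "nat \<Rightarrow> (nat \<Rightarrow> real) \<Rightarrow> (nat \<Rightarrow> real) \<Rightarrow> point \<Rightarrow> nat \<Rightarrow> real" where
  "Bm N lam mu z n = ip N lam mu n 1 2 z + ip N lam mu n 2 3 z"
definition Cm :: "nat \<Rightarrow> (nat \<Rightarrow> real) \<Rightarrow> (nat \<Rightarrow> real) \<Rightarrow> point \<Rightarrow> nat \<Rightarrow> real" where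
  "Cm N lam mu z n = ip N lam mu n 2 1 z + ip N lam mu n 3 2 z"

lemma Fm_Phi: "m \<ge> 1 \<Longrightarrow> Fm N lam mu m z = Phi m (Am N lam mu z) (Bm N lam mu z) (Cm N lam mu z)"
  unfolding Fm_def Phi_def Am_def Bm_def Cm_def by (auto simp: algebra_simps)

definition upd_phi :: "point \<Rightarrow> nat \<Rightarrow> nat \<Rightarrow> real \<Rightarrow> point" where
  "upd_phi z i j t = ((\<lambda>a c. if a = i \<and> c = j then fst z a c + t else fst z a c), snd z)"
definition upd_psi :: "point \<Rightarrow> nat \<Rightarrow> nat \<Rightarrow> real \<Rightarrow> point" where
  "upd_psi z i j t = (fst z, (\<lambda>a c. if a = i \<and> c = j then snd z a c + t else snd z a c))"

lemma pd_phi_upd: "pd_phi F z i j = deriv (\<lambda>t. F (upd_phi z i j t)) 0"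
  unfolding pd_phi_def upd_phi_def ..
lemma pd_psi_upd: "pd_psi F z i j = deriv (\<lambda>t. F (upd_psi z i j t)) 0"
  unfolding pd_psi_def upd_psi_def ..

definition ephi :: "point \<Rightarrow> nat \<Rightarrow> nat \<Rightarrow> nat \<Rightarrow> nat \<Rightarrow> real" where
  "ephi z i j a b = (if a = i then snd z b j else 0)"
definition epsi :: "point \<Rightarrow> nat \<Rightarrow> nat \<Rightarrow> nat \<Rightarrow> nat \<Rightarrow> real" where
  "epsi z i j a b = (if b = i then fst z a j else 0)"

lemma ip_upd_phi:
  assumes "j \<in> {1..N}"
  shows "ip N lam mu k a b (upd_phi z i j t) = ip N lam mu k a b z + t * (lam j ^ k * mu j * ephi z i j a b)"
proof -
  have "ip N lam mu k a b (upd_phi z i j t) =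
     (\<Sum>c=1..N. (lam c ^ k * fst z a c) * (mu c * snd z b c) + (if c = j then t * (lam j ^ k * mu j * ephi z i j a b) else 0))"
    unfolding ip_def upd_phi_def ephi_def by (intro sum.cong refl) (auto simp: algebra_simps)
  also have "\<dots> = ip N lam mu k a b z + t * (lam j ^ k * mu j * ephi z i j a b)"
    using assms by (simp add: sum.distrib ip_def)
  finally show ?thesis .
qed

lemma ip_upd_psi:
  assumes "j \<in> {1..N}"
  shows "ip N lam mu k a b (upd_psi z i j t) = ip N lam mu k a b z + t * (lam j ^ k * mu j * epsi z i j a b)"
proof -
  have "ip N lam mu k a b (upd_psi z i j t) =
     (\<Sum>c=1..N. (lam c ^ k * fst z a c) * (mu c * snd z b c) + (if c = j then t * (lam j ^ k * mu j * epsi z i j a b) else 0))"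
    unfolding ip_def upd_psi_def epsi_def by (intro sum.cong refl) (auto simp: algebra_simps)
  also have "\<dots> = ip N lam mu k a b z + t * (lam j ^ k * mu j * epsi z i j a b)"
    using assms by (simp add: sum.distrib ip_def)
  finally show ?thesis .
qed

definition GA :: "nat \<Rightarrow> (nat \<Rightarrow> real) \<Rightarrow> (nat \<Rightarrow> real) \<Rightarrow> nat \<Rightarrow> point \<Rightarrow> nat \<Rightarrow> real" where
  "GA N lam mu m z j = (\<Sum>p<m. gA (Am N lam mu z) m p * lam j ^ p)"
definition GB :: "nat \<Rightarrow> (nat \<Rightarrow> real) \<Rightarrow> (nat \<Rightarrow> real) \<Rightarrow> nat \<Rightarrow> point \<Rightarrow> nat \<Rightarrow> real" where
  "GB N lam mu m z j = (\<Sum>p<m. gZ (Cm N lam mu z) m p * lam j ^ p)"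
definition GC :: "nat \<Rightarrow> (nat \<Rightarrow> real) \<Rightarrow> (nat \<Rightarrow> real) \<Rightarrow> nat \<Rightarrow> point \<Rightarrow> nat \<Rightarrow> real" where
  "GC N lam mu m z j = (\<Sum>p<m. gZ (Bm N lam mu z) m p * lam j ^ p)"

lemma Phi_line_deriv:
  assumes "m \<ge> 1"
  shows "((\<lambda>t. Phi m (\<lambda>n. A n + t * dA n) (\<lambda>n. B n + t * dB n) (\<lambda>n. C n + t * dC n)) has_real_derivative
     (\<Sum>p<m. gA A m p * dA p + gZ C m p * dB p + gZ B m p * dC p)) (at 0)"
proof -
  have "((\<lambda>t. Phi m (\<lambda>n. A n + t * dA n) (\<lambda>n. B n + t * dB n) (\<lambda>n. C n + t * dC n)) has_real_derivative
     (\<Sum>p<m. gA (\<lambda>n. A n + 0 * dA n) m p * dA p + gZ (\<lambda>n. C n + 0 * dC n) m p * dB p + gZ (\<lambda>n. B n + 0 * dB n) m p * dC p)) (at 0)"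
    unfolding Dphi_eq[OF assms, symmetric]
    by (rule Phi_deriv0) (auto intro!: derivative_eq_intros)
  thus ?thesis by simp
qed

lemma pd_phi_Fm:
  assumes "m \<ge> 1" "j \<in> {1..N}"
  shows "pd_phi (Fm N lam mu m) z i j = mu j * (GA N lam mu m z j * (ephi z i j 1 1 - ephi z i j 3 3)
     + GB N lam mu m z j * (ephi z i j 1 2 + ephi z i j 2 3) + GC N lam mu m z j * (ephi z i j 2 1 + ephi z i j 3 2))"
proof -
  have "(\<lambda>t. Fm N lam mu m (upd_phi z i j t)) = (\<lambda>t. Phi m
     (\<lambda>n. Am N lam mu z n + t * (lam j ^ n * mu j * (ephi z i j 1 1 - ephi z i j 3 3)))
     (\<lambda>n. Bm N lam mu z n + t * (lam j ^ n * mu j * (ephi z i j 1 2 + ephi z i j 2 3)))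
     (\<lambda>n. Cm N lam mu z n + t * (lam j ^ n * mu j * (ephi z i j 2 1 + ephi z i j 3 2))))"
    using assms by (auto simp: Fm_Phi Am_def Bm_def Cm_def ip_upd_phi algebra_simps intro!: ext arg_cong3[where f="Phi m"])
  then show ?thesis
    unfolding pd_phi_upd
    apply simp
    apply (rule DERIV_imp_deriv[OF Phi_line_deriv[OF assms(1)], THEN trans])
    apply (simp add: GA_def GB_def GC_def sum_distrib_left sum_distrib_right sum.distrib sum_subtractf algebra_simps)
    done
qed

lemma pd_psi_Fm:
  assumes "m \<ge> 1" "j \<in> {1..N}"
  shows "pd_psi (Fm N lam mu m) z i j = mu j * (GA N lam mu m z j * (epsi z i j 1 1 - epsi z i j 3 3)
     + GB N lam mu m z j * (epsi z i j 1 2 + epsi z i j 2 3) + GC N lam mu m z j * (epsi z i j 2 1 + epsi z i j 3 2))"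
proof -
  have "(\<lambda>t. Fm N lam mu m (upd_psi z i j t)) = (\<lambda>t. Phi m
     (\<lambda>n. Am N lam mu z n + t * (lam j ^ n * mu j * (epsi z i j 1 1 - epsi z i j 3 3)))
     (\<lambda>n. Bm N lam mu z n + t * (lam j ^ n * mu j * (epsi z i j 1 2 + epsi z i j 2 3)))
     (\<lambda>n. Cm N lam mu z n + t * (lam j ^ n * mu j * (epsi z i j 2 1 + epsi z i j 3 2))))"
    using assms by (auto simp: Fm_Phi Am_def Bm_def Cm_def ip_upd_psi algebra_simps intro!: ext arg_cong3[where f="Phi m"])
  then show ?thesis
    unfolding pd_psi_upd
    apply simp
    apply (rule DERIV_imp_deriv[OF Phi_line_deriv[OF assms(1)], THEN trans])
    apply (simp add: GA_def GB_def GC_def sum_distrib_left sum_distrib_right sum.distrib sum_subtractf algebra_simps)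
    done
qed


lemma sum3: "(\<Sum>i=1..3. f i) = f 1 + f 2 + (f (3::nat) :: real)"
  by (simp add: numeral_3_eq_3 numeral_2_eq_2 atLeastAtMostSuc_conv)

definition eA :: "point \<Rightarrow> nat \<Rightarrow> real" where
  "eA z j = fst z 1 j * snd z 1 j - fst z 3 j * snd z 3 j"
definition eB :: "point \<Rightarrow> nat \<Rightarrow> real" where
  "eB z j = fst z 1 j * snd z 2 j + fst z 2 j * snd z 3 j"
definition eC :: "point \<Rightarrow> nat \<Rightarrow> real" where
  "eC z j = fst z 2 j * snd z 1 j + fst z 3 j * snd z 2 j"

lemma Am_sum: "Am N lam mu z n = (\<Sum>j=1..N. lam j ^ n * mu j * eA z j)"
  unfolding Am_def ip_def eA_def by (simp add: sum_subtractf[symmetric] algebra_simps)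
lemma Bm_sum: "Bm N lam mu z n = (\<Sum>j=1..N. lam j ^ n * mu j * eB z j)"
  unfolding Bm_def ip_def eB_def by (simp add: sum.distrib[symmetric] algebra_simps)
lemma Cm_sum: "Cm N lam mu z n = (\<Sum>j=1..N. lam j ^ n * mu j * eC z j)"
  unfolding Cm_def ip_def eC_def by (simp add: sum.distrib[symmetric] algebra_simps)

lemma conv:
  "(\<Sum>j\<in>J. mu j * ((\<Sum>p<k. a p * lam j ^ p) * (\<Sum>q<l. b q * lam j ^ q)) * e j)
   = (\<Sum>p<k. \<Sum>q<l. a p * b q * (\<Sum>j\<in>J. lam j ^ (p+q) * mu j * (e j :: real)))"
proof -
  have "(\<Sum>j\<in>J. mu j * ((\<Sum>p<k. a p * lam j ^ p) * (\<Sum>q<l. b q * lam j ^ q)) * e j)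
     = (\<Sum>j\<in>J. \<Sum>p<k. \<Sum>q<l. a p * b q * (lam j ^ (p+q) * mu j * e j))"
    unfolding sum_product by (simp add: sum_distrib_left power_add mult_ac)
  also have "\<dots> = (\<Sum>p<k. \<Sum>j\<in>J. \<Sum>q<l. a p * b q * (lam j ^ (p+q) * mu j * e j))"
    by (rule sum.swap)
  also have "\<dots> = (\<Sum>p<k. \<Sum>q<l. \<Sum>j\<in>J. a p * b q * (lam j ^ (p+q) * mu j * e j))"
    by (rule sum.cong[OF refl], rule sum.swap)
  also have "\<dots> = (\<Sum>p<k. \<Sum>q<l. a p * b q * (\<Sum>j\<in>J. lam j ^ (p+q) * mu j * e j))"
    by (simp add: sum_distrib_left)
  finally show ?thesis .
qed

lemma pbracket_FF:
  assumes "k \<ge> 1" "l \<ge> 1" "\<forall>j\<in>{1..N}. mu j \<noteq> 0"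
  shows "pbracket N mu (Fm N lam mu k) (Fm N lam mu l) z = PBr (Am N lam mu z) (Bm N lam mu z) (Cm N lam mu z) k l"
proof -
  let ?GAk = "GA N lam mu k z" and ?GBk = "GB N lam mu k z" and ?GCk = "GC N lam mu k z"
  let ?GAl = "GA N lam mu l z" and ?GBl = "GB N lam mu l z" and ?GCl = "GC N lam mu l z"
  have "pbracket N mu (Fm N lam mu k) (Fm N lam mu l) z =
    (\<Sum>j=1..N. \<Sum>i=1..3. pd_psi (Fm N lam mu k) z i j * (pd_phi (Fm N lam mu l) z i j / mu j)
       - pd_phi (Fm N lam mu k) z i j * (pd_psi (Fm N lam mu l) z i j / mu j))"
    unfolding pbracket_def by (rule sum.swap)
  also have "\<dots> = (\<Sum>j=1..N. mu j * (?GAk j * ?GBl j) * eB z j - mu j * (?GAk j * ?GCl j) * eC z j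
      - mu j * (?GBk j * ?GAl j) * eB z j + mu j * (?GBk j * ?GCl j) * eA z j
      + mu j * (?GCk j * ?GAl j) * eC z j - mu j * (?GCk j * ?GBl j) * eA z j)"
  proof (rule sum.cong[OF refl])
    fix j assume j: "j \<in> {1..N}"
    hence mj: "mu j \<noteq> 0" using assms(3) by auto
    show "(\<Sum>i=1..3. pd_psi (Fm N lam mu k) z i j * (pd_phi (Fm N lam mu l) z i j / mu j)
       - pd_phi (Fm N lam mu k) z i j * (pd_psi (Fm N lam mu l) z i j / mu j)) =
       mu j * (?GAk j * ?GBl j) * eB z j - mu j * (?GAk j * ?GCl j) * eC z j
      - mu j * (?GBk j * ?GAl j) * eB z j + mu j * (?GBk j * ?GCl j) * eA z j
      + mu j * (?GCk j * ?GAl j) * eC z j - mu j * (?GCk j * ?GBl j) * eA z j"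
      unfolding sum3 pd_phi_Fm[OF assms(1) j] pd_psi_Fm[OF assms(1) j] pd_phi_Fm[OF assms(2) j] pd_psi_Fm[OF assms(2) j]
      unfolding nonzero_mult_div_cancel_left[OF mj]
      by (simp add: ephi_def epsi_def eA_def eB_def eC_def algebra_simps)
  qed
  also have "\<dots> = PBr (Am N lam mu z) (Bm N lam mu z) (Cm N lam mu z) k l"
    unfolding PBr_def GA_def GB_def GC_def sum.distrib sum_subtractf conv Am_sum Bm_sum Cm_sum
    by simp
  finally show ?thesis .
qed



lemma gv: "gA A (Suc (Suc 0)) 0 = 8 * A 0" "gA A (Suc (Suc 0)) (Suc 0) = -8"
  "gZ C (Suc (Suc 0)) 0 = 8 * C 0" "gZ C (Suc (Suc 0)) (Suc 0) = 0"
  "gA A (Suc 0) 0 = -8" "gZ C (Suc 0) 0 = 0"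
  by (simp_all add: gA_def gZ_def Ah_def Zh_def)

lemma flow_zero:
  "(\<Sum>p<m. gA A m p * (2*B 0*C p - 2*C 0*B p) + gZ C m p * (-2*B (Suc p) - 2*B 0*A p)
      + gZ B m p * (2*C (Suc p) + 2*C 0*A p)) = 0"
proof -
  define T2 where "T2 p = gA A m p * (8*C 0) * B p - gA A m p * (8*B 0) * C p - gZ C m p * (8*A 0) * B p
     + gZ C m p * (8*B 0)* A p + gZ B m p * (8 * A 0) * C p - gZ B m p * (8*C 0) * A p
     + 8 * gZ C m p * B (Suc p) - 8 * gZ B m p * C (Suc p)" for p
  define T1 where "T1 p = 8 * gZ C m p * B p - 8 * gZ B m p * C p" for p
  have e2: "PBr A B C m (Suc (Suc 0)) = (\<Sum>p<m. T2 p)"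
    unfolding PBr_def T2_def by (intro sum.cong refl) (simp add: gv algebra_simps)
  have e1: "PBr A B C m (Suc 0) = (\<Sum>p<m. T1 p)"
    unfolding PBr_def T1_def by (intro sum.cong refl) (simp add: gv algebra_simps)
  have "(\<Sum>p<m. gA A m p * (2*B 0*C p - 2*C 0*B p) + gZ C m p * (-2*B (Suc p) - 2*B 0*A p)
      + gZ B m p * (2*C (Suc p) + 2*C 0*A p)) = (\<Sum>p<m. -(1/4) * T2 p - (1/4) * A 0 * T1 p)"
    unfolding T1_def T2_def by (intro sum.cong refl) (simp add: algebra_simps)
  also have "\<dots> = -(1/4) * PBr A B C m (Suc (Suc 0)) - (1/4) * A 0 * PBr A B C m (Suc 0)"
    unfolding e1 e2 by (simp add: sum_subtractf sum_distrib_left)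
  also have "\<dots> = 0" by (simp add: PBr_zero)
  finally show ?thesis .
qed

lemma Fbar_upd_phi:
  assumes "i \<in> {1..3}"
  shows "Fbar j0 (upd_phi z i j t) = Fbar j0 z + t * (if j = j0 then snd z i j else 0)"
proof -
  have "Fbar j0 (upd_phi z i j t) = (\<Sum>a=1..3. fst z a j0 * snd z a j0 + (if a = i then (if j = j0 then t * snd z i j else 0) else 0))"
    unfolding Fbar_def upd_phi_def by (intro sum.cong refl) (auto simp: algebra_simps)
  also have "\<dots> = Fbar j0 z + t * (if j = j0 then snd z i j else 0)"
    using assms by (simp add: sum.distrib Fbar_def)
  finally show ?thesis .
qed

lemma Fbar_upd_psi:
  assumes "i \<in> {1..3}"
  shows "Fbar j0 (upd_psi z i j t) = Fbar j0 z + t * (if j = j0 then fst z i j else 0)"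
proof -
  have "Fbar j0 (upd_psi z i j t) = (\<Sum>a=1..3. fst z a j0 * snd z a j0 + (if a = i then (if j = j0 then t * fst z i j else 0) else 0))"
    unfolding Fbar_def upd_psi_def by (intro sum.cong refl) (auto simp: algebra_simps)
  also have "\<dots> = Fbar j0 z + t * (if j = j0 then fst z i j else 0)"
    using assms by (simp add: sum.distrib Fbar_def)
  finally show ?thesis .
qed

lemma deriv_lin: "deriv (\<lambda>t. c + t * (d::real)) 0 = d"
  by (rule DERIV_imp_deriv) (auto intro!: derivative_eq_intros)

lemma pd_phi_Fbar: "i \<in> {1..3} \<Longrightarrow> pd_phi (Fbar j0) z i j = (if j = j0 then snd z i j else 0)"
  unfolding pd_phi_upd Fbar_upd_phi by (rule deriv_lin)
lemma pd_psi_Fbar: "i \<in> {1..3} \<Longrightarrow> pd_psi (Fbar j0) z i j = (if j = j0 then fst z i j else 0)"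
  unfolding pd_psi_upd Fbar_upd_psi by (rule deriv_lin)

lemma pbracket_Fbar:
  assumes "m \<ge> 1" "j0 \<in> {1..N}" "\<forall>j\<in>{1..N}. mu j \<noteq> 0"
  shows "pbracket N mu (Fm N lam mu m) (Fbar j0) z = 0"
proof -
  have "pbracket N mu (Fm N lam mu m) (Fbar j0) z =
    (\<Sum>j=1..N. \<Sum>i=1..3. pd_psi (Fm N lam mu m) z i j * (pd_phi (Fbar j0) z i j / mu j)
       - pd_phi (Fm N lam mu m) z i j * (pd_psi (Fbar j0) z i j / mu j))"
    unfolding pbracket_def by (rule sum.swap)
  also have "\<dots> = (\<Sum>j=1..N. 0)"
  proof (rule sum.cong[OF refl])
    fix j assume j: "j \<in> {1..N}"
    hence mj: "mu j \<noteq> 0" using assms(3) by auto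
    have c: "\<And>P c. mu j * P * (c / mu j) = P * c" using mj by simp
    show "(\<Sum>i=1..3. pd_psi (Fm N lam mu m) z i j * (pd_phi (Fbar j0) z i j / mu j)
       - pd_phi (Fm N lam mu m) z i j * (pd_psi (Fbar j0) z i j / mu j)) = 0"
    proof (cases "j = j0")
      case True
      show ?thesis
        unfolding sum3 pd_phi_Fm[OF assms(1) j] pd_psi_Fm[OF assms(1) j]
        by (simp add: pd_phi_Fbar pd_psi_Fbar True c ephi_def epsi_def algebra_simps)
    next
      case False
      have "(\<Sum>i=1..3. pd_psi (Fm N lam mu m) z i j * (pd_phi (Fbar j0) z i j / mu j)
       - pd_phi (Fm N lam mu m) z i j * (pd_psi (Fbar j0) z i j / mu j)) = (\<Sum>i=1..(3::nat). (0::real))"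
        by (rule sum.cong[OF refl]) (simp add: pd_phi_Fbar pd_psi_Fbar False)
      thus ?thesis by simp
    qed
  qed
  finally show ?thesis by simp
qed



lemma sq_q: "sqrt 2 * qt N lam mu X = 2 * Bm N lam mu X 0"
  unfolding qt_def Bm_def by (simp add: mult.assoc[symmetric])
lemma sq_r: "sqrt 2 * rt N lam mu X = 2 * Cm N lam mu X 0"
  unfolding rt_def Cm_def by (simp add: mult.assoc[symmetric])

lemma sol_comp:
  fixes Z :: "real \<Rightarrow> point" and N :: nat and lam mu :: "nat \<Rightarrow> real" and x :: real
  assumes sol: "is_solution N lam mu a b Z" and x: "x \<in> {a<..<b}" and j: "j \<in> {1..N}"
  defines "X \<equiv> Z x"
  defines "B0 \<equiv> Bm N lam mu X 0" and "C0 \<equiv> Cm N lam mu X 0" and "l \<equiv> lam j"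
  shows "((\<lambda>y. fst (Z y) 1 j) has_real_derivative (-2*l* fst X 1 j + 2*B0* fst X 2 j)) (at x)"
    and "((\<lambda>y. fst (Z y) 2 j) has_real_derivative (2*C0* fst X 1 j + 2*B0* fst X 3 j)) (at x)"
    and "((\<lambda>y. fst (Z y) 3 j) has_real_derivative (2*C0* fst X 2 j + 2*l* fst X 3 j)) (at x)"
    and "((\<lambda>y. snd (Z y) 1 j) has_real_derivative (2*l* snd X 1 j - 2*C0* snd X 2 j)) (at x)"
    and "((\<lambda>y. snd (Z y) 2 j) has_real_derivative (-2*B0* snd X 1 j - 2*C0* snd X 3 j)) (at x)"
    and "((\<lambda>y. snd (Z y) 3 j) has_real_derivative (-2*B0* snd X 2 j - 2*l* snd X 3 j)) (at x)"
proof -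
  have S: "\<And>i. i \<in> {1..3} \<Longrightarrow> ((\<lambda>y. fst (Z y) i j) has_real_derivative
          (\<Sum>k=1..3. Umat (qt N lam mu X) (rt N lam mu X) l i k * fst X k j)) (at x)
     \<and> ((\<lambda>y. snd (Z y) i j) has_real_derivative
          - (\<Sum>k=1..3. Umat (qt N lam mu X) (rt N lam mu X) l k i * snd X k j)) (at x)"
    using sol x j unfolding is_solution_def X_def l_def by blast
  have i1: "(1::nat) \<in> {1..3}" and i2: "(2::nat) \<in> {1..3}" and i3: "(3::nat) \<in> {1..3}" by auto
  note U = Umat_def sq_q sq_r B0_def C0_def algebra_simps
  show "((\<lambda>y. fst (Z y) 1 j) has_real_derivative (-2*l* fst X 1 j + 2*B0* fst X 2 j)) (at x)"
    using conjunct1[OF S[OF i1]] by (rule DERIV_cong) (unfold sum3, simp add: U)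
  show "((\<lambda>y. fst (Z y) 2 j) has_real_derivative (2*C0* fst X 1 j + 2*B0* fst X 3 j)) (at x)"
    using conjunct1[OF S[OF i2]] by (rule DERIV_cong) (unfold sum3, simp add: U)
  show "((\<lambda>y. fst (Z y) 3 j) has_real_derivative (2*C0* fst X 2 j + 2*l* fst X 3 j)) (at x)"
    using conjunct1[OF S[OF i3]] by (rule DERIV_cong) (unfold sum3, simp add: U)
  show "((\<lambda>y. snd (Z y) 1 j) has_real_derivative (2*l* snd X 1 j - 2*C0* snd X 2 j)) (at x)"
    using conjunct2[OF S[OF i1]] by (rule DERIV_cong) (unfold sum3, simp add: U)
  show "((\<lambda>y. snd (Z y) 2 j) has_real_derivative (-2*B0* snd X 1 j - 2*C0* snd X 3 j)) (at x)"
    using conjunct2[OF S[OF i2]] by (rule DERIV_cong) (unfold sum3, simp add: U)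
  show "((\<lambda>y. snd (Z y) 3 j) has_real_derivative (-2*B0* snd X 2 j - 2*l* snd X 3 j)) (at x)"
    using conjunct2[OF S[OF i3]] by (rule DERIV_cong) (unfold sum3, simp add: U)
qed



lemma moments_flow:
  fixes Z :: "real \<Rightarrow> point" and N :: nat and lam mu :: "nat \<Rightarrow> real" and x :: real
  assumes sol: "is_solution N lam mu a b Z" and x: "x \<in> {a<..<b}"
  defines "X \<equiv> Z x"
  defines "B0 \<equiv> Bm N lam mu X 0" and "C0 \<equiv> Cm N lam mu X 0"
  shows "((\<lambda>y. Am N lam mu (Z y) n) has_real_derivative (2*B0*Cm N lam mu X n - 2*C0*Bm N lam mu X n)) (at x)"
    and "((\<lambda>y. Bm N lam mu (Z y) n) has_real_derivative (-2*Bm N lam mu X (Suc n) - 2*B0*Am N lam mu X n)) (at x)"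
    and "((\<lambda>y. Cm N lam mu (Z y) n) has_real_derivative (2*Cm N lam mu X (Suc n) + 2*C0*Am N lam mu X n)) (at x)"
proof -
  note sc = sol_comp[OF sol x]
  have "((\<lambda>y. \<Sum>j=1..N. lam j ^ n * mu j * eA (Z y) j) has_real_derivative
      (\<Sum>j=1..N. lam j ^ n * mu j * (2*B0*eC X j - 2*C0*eB X j))) (at x)"
    unfolding eA_def
    apply (rule DERIV_sum)
    subgoal for j using sc[of j] by (auto intro!: derivative_eq_intros simp: X_def B0_def C0_def eB_def eC_def algebra_simps)
    done
  then show "((\<lambda>y. Am N lam mu (Z y) n) has_real_derivative (2*B0*Cm N lam mu X n - 2*C0*Bm N lam mu X n)) (at x)"
    unfolding Am_sum Bm_sum Cm_sum
    by (simp add: sum_subtractf sum_distrib_left algebra_simps)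
  have "((\<lambda>y. \<Sum>j=1..N. lam j ^ n * mu j * eB (Z y) j) has_real_derivative
      (\<Sum>j=1..N. - 2 * (lam j ^ Suc n * mu j * eB X j) - 2*B0*(lam j ^ n * mu j * eA X j))) (at x)"
    unfolding eB_def
    apply (rule DERIV_sum)
    subgoal for j using sc[of j] by (auto intro!: derivative_eq_intros simp: X_def B0_def C0_def eA_def eB_def algebra_simps)
    done
  then show "((\<lambda>y. Bm N lam mu (Z y) n) has_real_derivative (-2*Bm N lam mu X (Suc n) - 2*B0*Am N lam mu X n)) (at x)"
    unfolding Am_sum Bm_sum Cm_sum
    by (simp add: sum_subtractf sum_distrib_left algebra_simps)
  have "((\<lambda>y. \<Sum>j=1..N. lam j ^ n * mu j * eC (Z y) j) has_real_derivative
      (\<Sum>j=1..N. 2 * (lam j ^ Suc n * mu j * eC X j) + 2*C0*(lam j ^ n * mu j * eA X j))) (at x)"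
    unfolding eC_def
    apply (rule DERIV_sum)
    subgoal for j using sc[of j] by (auto intro!: derivative_eq_intros simp: X_def B0_def C0_def eA_def eC_def algebra_simps)
    done
  then show "((\<lambda>y. Cm N lam mu (Z y) n) has_real_derivative (2*Cm N lam mu X (Suc n) + 2*C0*Am N lam mu X n)) (at x)"
    unfolding Am_sum Bm_sum Cm_sum
    by (simp add: sum.distrib sum_distrib_left algebra_simps)
qed



lemma Fm_flow_deriv:
  assumes m: "m \<ge> 1" and sol: "is_solution N lam mu a b Z" and x: "x \<in> {a<..<b}"
  shows "((\<lambda>y. Fm N lam mu m (Z y)) has_real_derivative 0) (at x)"
proof -
  have e: "(\<lambda>y. Fm N lam mu m (Z y)) = (\<lambda>y. Phi m (Am N lam mu (Z y)) (Bm N lam mu (Z y)) (Cm N lam mu (Z y)))"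
    using Fm_Phi[OF m] by auto
  note mf = moments_flow[OF sol x]
  note D = Phi_deriv0[where a="\<lambda>y. Am N lam mu (Z y)" and b="\<lambda>y. Bm N lam mu (Z y)" and c="\<lambda>y. Cm N lam mu (Z y)",
     OF mf(1) mf(2) mf(3), of m]
  note E = Dphi_eq[OF m, where da="\<lambda>n. 2 * Bm N lam mu (Z x) 0 * Cm N lam mu (Z x) n - 2 * Cm N lam mu (Z x) 0 * Bm N lam mu (Z x) n"
     and db="\<lambda>n. -2 * Bm N lam mu (Z x) (Suc n) - 2 * Bm N lam mu (Z x) 0 * Am N lam mu (Z x) n"
     and dc="\<lambda>n. 2 * Cm N lam mu (Z x) (Suc n) + 2 * Cm N lam mu (Z x) 0 * Am N lam mu (Z x) n"
     and A="Am N lam mu (Z x)" and B="Bm N lam mu (Z x)" and C="Cm N lam mu (Z x)"]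
  show ?thesis unfolding e using D unfolding E flow_zero .
qed

lemma Fm_const:
  assumes m: "m \<ge> 1" and sol: "is_solution N lam mu a b Z" and x: "x \<in> {a<..<b}" and y: "y \<in> {a<..<b}"
  shows "Fm N lam mu m (Z x) = Fm N lam mu m (Z y)"
proof -
  obtain c where "\<forall>t\<in>{a<..<b}. Fm N lam mu m (Z t) = c"
    using has_field_derivative_zero_constant[of "{a<..<b}" "\<lambda>t. Fm N lam mu m (Z t)"]
    using Fm_flow_deriv[OF m sol] by (auto intro: has_field_derivative_at_within)
  thus ?thesis using x y by auto
qed

theorem theorem3p2:
  fixes N :: nat and lam mu :: "nat \<Rightarrow> real"
  assumes "N \<ge> 1"
    and "inj_on lam {1..N}"
    and "\<forall>j \<in> {1..N}. mu j \<noteq> 0"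
  shows "(\<forall>m \<ge> 1. \<forall>a b Z. is_solution N lam mu a b Z \<longrightarrow>
            (\<forall>x \<in> {a<..<b}. \<forall>y \<in> {a<..<b}. Fm N lam mu m (Z x) = Fm N lam mu m (Z y)))
       \<and> (\<forall>k \<ge> 1. \<forall>l \<ge> 1. \<forall>z. pbracket N mu (Fm N lam mu k) (Fm N lam mu l) z = 0)
       \<and> (\<forall>m \<ge> 1. \<forall>j \<in> {1..N}. \<forall>z. pbracket N mu (Fm N lam mu m) (Fbar j) z = 0)"
proof (intro conjI allI impI ballI)
  fix m :: nat and a b :: real and Z x y
  assume "m \<ge> 1" "is_solution N lam mu a b Z" "x \<in> {a<..<b}" "y \<in> {a<..<b}"
  thus "Fm N lam mu m (Z x) = Fm N lam mu m (Z y)" by (rule Fm_const)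
next
  fix k l :: nat and z
  assume "k \<ge> 1" "l \<ge> 1"
  thus "pbracket N mu (Fm N lam mu k) (Fm N lam mu l) z = 0"
    using pbracket_FF[OF _ _ assms(3)] PBr_zero by simp
next
  fix m j :: nat and z
  assume "m \<ge> 1" "j \<in> {1..N}"
  thus "pbracket N mu (Fm N lam mu m) (Fbar j) z = 0"
    by (rule pbracket_Fbar[OF _ _ assms(3)])
qed

end
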